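(* Let $\alpha>-1$, $d\in\widetilde{D}$, $p=(L_n^{(\alpha+1)})_{n\in\mathbb{N}_0}$, $q=(L_n^{(\alpha)})_{n\in\mathbb{N}_0}$, and let $T=E_{p,d}$ be regarded as an operator in $H(q)$ with domain $\mathcal{P}_c$. Let $f=\sum_kf_kq_k\in H(q)$ be such that (i) $\lim_{n\to\infty}\sum_{u=1}^nf_u(d_u-d_{u-1})$ exists and is finite, say equal to $S$; (ii) the sequence $(g_k)_{k\in\mathbb{N}_0}$ defined by $g_0=S+f_0d_0$ and $g_k=S-\sum_{u=1}^kf_u(d_u-d_{u-1})+f_kd_k$ for $k\ge1$ is in $\ell_2$; (iii) $\lim_{n\to\infty}(n+1)|f_nd_n-g_n|^2=0$. Then $f\in D(\overline{T})$ and $g=\lim_{n\to\infty}\sum_{t=0}^ng_tq_t$ is the unique element of $H(q)$ such that $(f,g)\in G(\overline{T})$.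
   Context: $\mathcal{P}_c$ is the space of polynomials in one real variable with complex coefficients. For $\beta>-1$, $L_n^{(\beta)}(x)=\sum_{k=0}^n\frac{(-1)^k}{k!}\binom{n+\beta}{n-k}x^k$ is the generalized Laguerre polynomial. For a sequence $Q=(Q_n)$ of polynomials with $\deg Q_n=n$, $H(Q)$ is the completion of $\mathcal{P}_c$ with respect to the inner product making $(Q_n)$ orthonormal; $g\in H(Q)$ is written $g=\sum_kg_kQ_k$, $(g_k)\in\ell_2$. $\widetilde{D}$ is the set of non-constant sequences of non-zero complex numbers. For a polynomial sequence $p$ and $d\in\widetilde{D}$, $E_{p,d}$ is the linear map on $\mathcal{P}_c$ with $E_{p,d}(p_n)=d_np_n$. $\overline{T}$ denotes the closure of $T$, whose graph $G(\overline{T})$ is the closure of the graph of $T$ in $H(q)\times H(q)$. *)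

theory Defs
  imports "HOL-Analysis.Analysis" "HOL-Computational_Algebra.Polynomial"
begin

definition laguerre :: "real \<Rightarrow> nat \<Rightarrow> complex poly" where
  "laguerre \<beta> n = (\<Sum>k\<le>n. monom (complex_of_real ((-1)^k / fact k * ((real n + \<beta>) gchoose (n - k)))) k)"

definition basis_coeffs :: "(nat \<Rightarrow> complex poly) \<Rightarrow> complex poly \<Rightarrow> nat \<Rightarrow> complex" where
  "basis_coeffs Q P = (THE c. (\<forall>k>degree P. c k = 0) \<and> P = (\<Sum>k\<le>degree P. smult (c k) (Q k)))"

definition E_op :: "(nat \<Rightarrow> complex poly) \<Rightarrow> (nat \<Rightarrow> complex) \<Rightarrow> complex poly \<Rightarrow> complex poly" where
  "E_op p d P = (\<Sum>k\<le>degree P. smult (d k * basis_coeffs p P k) (p k))"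

text \<open>H(Q) is identified isometrically with l2 via g = sum_k g_k Q_k.\<close>
definition ell2 :: "(nat \<Rightarrow> complex) \<Rightarrow> bool" where
  "ell2 x \<longleftrightarrow> summable (\<lambda>k. (cmod (x k))^2)"

definition ell2_lim :: "(nat \<Rightarrow> nat \<Rightarrow> complex) \<Rightarrow> (nat \<Rightarrow> complex) \<Rightarrow> bool" where
  "ell2_lim X x \<longleftrightarrow> (\<forall>j. ell2 (\<lambda>k. X j k - x k)) \<and>
     (\<lambda>j. \<Sum>k. (cmod (X j k - x k))^2) \<longlonglongrightarrow> 0"

definition in_closed_graph :: "(nat \<Rightarrow> complex poly) \<Rightarrow> (complex poly \<Rightarrow> complex poly)
    \<Rightarrow> (nat \<Rightarrow> complex) \<Rightarrow> (nat \<Rightarrow> complex) \<Rightarrow> bool" where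
  "in_closed_graph Q T f g \<longleftrightarrow> ell2 f \<and> ell2 g \<and>
     (\<exists>P :: nat \<Rightarrow> complex poly.
        ell2_lim (\<lambda>j. basis_coeffs Q (P j)) f \<and> ell2_lim (\<lambda>j. basis_coeffs Q (T (P j))) g)"

definition closure_domain :: "(nat \<Rightarrow> complex poly) \<Rightarrow> (complex poly \<Rightarrow> complex poly)
    \<Rightarrow> (nat \<Rightarrow> complex) set" where
  "closure_domain Q T = {f. \<exists>g. in_closed_graph Q T f g}"

end

theory Submission
  imports Defs
begin


lemma laguerre_coeff:
  "coeff (laguerre b n) i = (if i \<le> n then complex_of_real ((-1)^i / fact i * ((real n + b) gchoose (n - i))) else 0)"
  unfolding laguerre_def by (simp add: coeff_sum coeff_monom)

lemma laguerre_deg: "degree (laguerre b n) \<le> n"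
  by (rule degree_le) (simp add: laguerre_coeff)

lemma laguerre_lead: "coeff (laguerre b n) n \<noteq> 0"
  by (simp add: laguerre_coeff)

lemma gsum: assumes "i \<le> n"
  shows "(real n + (b+1)) gchoose (n - i) = (\<Sum>k=i..n. (real k + b) gchoose (k - i))"
proof -
  have "(\<Sum>k=i..n. (real k + b) gchoose (k - i)) = (\<Sum>m\<le>n-i. (real (i+m) + b) gchoose m)"
    by (rule sum.reindex_bij_witness[of _ "\<lambda>m. i+m" "\<lambda>k. k - i"]) (use assms in auto)
  also have "\<dots> = (\<Sum>m\<le>n-i. ((real i + b) + of_nat m) gchoose m)"
    by (simp add: algebra_simps)
  also have "\<dots> = ((real i + b) + of_nat (n-i) + 1) gchoose (n-i)"
    by (rule gbinomial_parallel_sum)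
  also have "(real i + b) + of_nat (n-i) + 1 = real n + (b+1)" using assms by simp
  finally show ?thesis by simp
qed

lemma laguerre_sum: "laguerre (b+1) n = (\<Sum>k\<le>n. laguerre b k)"
proof (rule poly_eqI)
  fix i
  show "coeff (laguerre (b+1) n) i = coeff (\<Sum>k\<le>n. laguerre b k) i"
  proof (cases "i \<le> n")
    case True
    have "coeff (\<Sum>k\<le>n. laguerre b k) i = (\<Sum>k\<le>n. coeff (laguerre b k) i)" by (simp add: coeff_sum)
    also have "\<dots> = (\<Sum>k=i..n. complex_of_real ((-1)^i / fact i * ((real k + b) gchoose (k - i))))"
      by (rule sum.mono_neutral_cong_right) (auto simp: laguerre_coeff)
    also have "\<dots> = complex_of_real ((-1)^i / fact i * (\<Sum>k=i..n. (real k + b) gchoose (k - i)))"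
      by (simp add: sum_distrib_left)
    also have "\<dots> = coeff (laguerre (b+1) n) i" using True by (simp add: laguerre_coeff gsum)
    finally show ?thesis by simp
  next
    case False
    then show ?thesis by (simp add: laguerre_coeff coeff_sum)
  qed
qed



locale qbasis =
  fixes Q :: "nat \<Rightarrow> complex poly"
  assumes degQ: "\<And>k. degree (Q k) \<le> k" and leadQ: "\<And>k. coeff (Q k) k \<noteq> 0"
begin

lemma indep: "(\<Sum>k\<le>N. smult (c k) (Q k)) = 0 \<Longrightarrow> k \<le> N \<Longrightarrow> c k = 0"
proof (induction N arbitrary: k)
  case 0
  then have "smult (c 0) (Q 0) = 0" by simp
  moreover have "Q 0 \<noteq> 0" using leadQ[of 0] by auto
  ultimately show ?case using 0 by simp
next
  case (Suc N)
  have "0 = coeff (\<Sum>k\<le>Suc N. smult (c k) (Q k)) (Suc N)" using Suc.prems(1) by simp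
  also have "\<dots> = (\<Sum>k\<le>Suc N. c k * coeff (Q k) (Suc N))"
    by (simp add: coeff_sum)
  also have "\<dots> = c (Suc N) * coeff (Q (Suc N)) (Suc N)"
  proof -
    have "coeff (Q k) (Suc N) = 0" if "k \<le> N" for k
      using degQ[of k] that by (intro coeff_eq_0) simp
    then show ?thesis by (simp add: atMost_Suc)
  qed
  finally have "c (Suc N) = 0" using leadQ[of "Suc N"] by simp
  with Suc.prems(1) have "(\<Sum>k\<le>N. smult (c k) (Q k)) = 0" by (simp add: atMost_Suc)
  with Suc.IH \<open>c (Suc N) = 0\<close> Suc.prems(2) show ?case by (cases "k = Suc N") auto
qed

lemma span: "degree P \<le> n \<Longrightarrow> \<exists>c. P = (\<Sum>k\<le>n. smult (c k) (Q k))"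
proof (induction n arbitrary: P)
  case 0
  have Q0: "degree (Q 0) = 0" using degQ[of 0] by simp
  let ?c = "\<lambda>_. coeff P 0 / coeff (Q 0) 0"
  have "P = smult (?c 0) (Q 0)"
  proof (rule poly_eqI)
    fix i show "coeff P i = coeff (smult (?c 0) (Q 0)) i"
    proof (cases "i = 0")
      case True then show ?thesis using leadQ[of 0] by simp
    next
      case False
      then have "coeff P i = 0" "coeff (Q 0) i = 0" using 0 Q0 by (auto intro: coeff_eq_0)
      then show ?thesis by simp
    qed
  qed
  then show ?case by (intro exI[of _ ?c]) simp
next
  case (Suc n)
  define a where "a = coeff P (Suc n) / coeff (Q (Suc n)) (Suc n)"
  define P' where "P' = P - smult a (Q (Suc n))"
  have "degree P' \<le> n"
  proof (rule degree_le, intro allI impI)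
    fix i assume "n < i"
    show "coeff P' i = 0"
    proof (cases "i = Suc n")
      case True then show ?thesis using leadQ[of "Suc n"] by (simp add: P'_def a_def)
    next
      case False
      with \<open>n < i\<close> have "Suc n < i" by simp
      then have "coeff P i = 0" "coeff (Q (Suc n)) i = 0"
        using Suc.prems degQ[of "Suc n"] by (auto intro: coeff_eq_0)
      then show ?thesis by (simp add: P'_def)
    qed
  qed
  then obtain c where c: "P' = (\<Sum>k\<le>n. smult (c k) (Q k))" using Suc.IH by blast
  have "P = (\<Sum>k\<le>Suc n. smult ((c(Suc n := a)) k) (Q k))"
  proof -
    have "(\<Sum>k\<le>n. smult ((c(Suc n := a)) k) (Q k)) = (\<Sum>k\<le>n. smult (c k) (Q k))"
      by (rule sum.cong) auto
    then show ?thesis using c by (simp add: atMost_Suc P'_def algebra_simps)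
  qed
  then show ?case by blast
qed

definition good where
  "good P c \<longleftrightarrow> (\<forall>k>degree P. c k = 0) \<and> P = (\<Sum>k\<le>degree P. smult (c k) (Q k))"

lemma good_unique: "good P c1 \<Longrightarrow> good P c2 \<Longrightarrow> c1 = c2"
proof
  fix k assume g1: "good P c1" and g2: "good P c2"
  have "(\<Sum>k\<le>degree P. smult (c1 k - c2 k) (Q k)) = 0"
  proof -
    have "(\<Sum>k\<le>degree P. smult (c1 k - c2 k) (Q k)) = (\<Sum>k\<le>degree P. smult (c1 k) (Q k)) - (\<Sum>k\<le>degree P. smult (c2 k) (Q k))"
      by (simp add: smult_diff_left sum_subtractf)
    also have "\<dots> = P - P" using g1 g2 unfolding good_def by metis
    finally show ?thesis by simp
  qed
  then show "c1 k = c2 k" using g1 g2 indep[of "\<lambda>k. c1 k - c2 k" "degree P" k]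
    unfolding good_def by (cases "k \<le> degree P") auto
qed

lemma good_exists: "\<exists>c. good P c"
proof -
  obtain e where e: "P = (\<Sum>k\<le>degree P. smult (e k) (Q k))" using span[of P "degree P"] by auto
  let ?c = "\<lambda>k. if k \<le> degree P then e k else 0"
  have "good P ?c" unfolding good_def using e by (auto intro: sum.cong)
  then show ?thesis by blast
qed

lemma bc_good: "good P (basis_coeffs Q P)"
proof -
  have "\<exists>!c. good P c" using good_exists good_unique by blast
  then have "good P (THE c. good P c)" by (rule theI')
  moreover have "basis_coeffs Q P = (THE c. good P c)"
    unfolding basis_coeffs_def good_def by simp
  ultimately show ?thesis by simp
qed

lemma bc_zero: "k > degree P \<Longrightarrow> basis_coeffs Q P k = 0"
  using bc_good unfolding good_def by auto

lemma bc_repr: "degree P \<le> M \<Longrightarrow> P = (\<Sum>k\<le>M. smult (basis_coeffs Q P k) (Q k))"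
proof -
  assume M: "degree P \<le> M"
  have "P = (\<Sum>k\<le>degree P. smult (basis_coeffs Q P k) (Q k))" using bc_good unfolding good_def by auto
  also have "\<dots> = (\<Sum>k\<le>M. smult (basis_coeffs Q P k) (Q k))"
    by (rule sum.mono_neutral_left) (use M bc_zero in auto)
  finally show ?thesis .
qed

lemma deg_sum_le: "degree (\<Sum>k\<le>N. smult (c k) (Q k)) \<le> N"
proof (rule degree_sum_le)
  fix k assume "k \<in> {..N}"
  then show "degree (smult (c k) (Q k)) \<le> N"
    using degree_smult_le[of "c k" "Q k"] degQ[of k] by simp
qed simp

lemma coeffs_sum: "basis_coeffs Q (\<Sum>k\<le>N. smult (c k) (Q k)) k = (if k \<le> N then c k else 0)"
proof -
  define P where "P = (\<Sum>k\<le>N. smult (c k) (Q k))"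
  have dP: "degree P \<le> N" unfolding P_def by (rule deg_sum_le)
  have Pr: "P = (\<Sum>k\<le>N. smult (basis_coeffs Q P k) (Q k))" using bc_repr[OF dP] .
  then have "(\<Sum>k\<le>N. smult (c k - basis_coeffs Q P k) (Q k)) = 0"
  proof -
    have "(\<Sum>k\<le>N. smult (c k - basis_coeffs Q P k) (Q k)) = P - (\<Sum>k\<le>N. smult (basis_coeffs Q P k) (Q k))"
      unfolding P_def by (simp add: smult_diff_left sum_subtractf)
    then show ?thesis using Pr by simp
  qed
  then have "\<And>k. k \<le> N \<Longrightarrow> c k = basis_coeffs Q P k" using indep by fastforce
  moreover have "\<And>k. k > N \<Longrightarrow> basis_coeffs Q P k = 0" using bc_zero dP by auto
  ultimately show ?thesis unfolding P_def by (auto simp: not_le)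
qed

end


lemma smult_sum_right: "smult a (sum f S) = (\<Sum>x\<in>S. smult a (f x))"
  by (induction S rule: infinite_finite_induct) (auto simp: smult_add_right)

lemma swap_sum:
  fixes q :: "nat \<Rightarrow> complex poly"
  shows "(\<Sum>k\<le>N. smult (a k) (\<Sum>j\<le>k. q j)) = (\<Sum>j\<le>N. smult (\<Sum>k=j..N. a k) (q j))"
proof (induction N)
  case 0 then show ?case by simp
next
  case (Suc N)
  have "(\<Sum>j\<le>Suc N. smult (\<Sum>k=j..Suc N. a k) (q j))
      = (\<Sum>j\<le>N. smult (\<Sum>k=j..Suc N. a k) (q j)) + smult (a (Suc N)) (q (Suc N))"
    by (simp add: atMost_Suc)
  also have "(\<Sum>j\<le>N. smult (\<Sum>k=j..Suc N. a k) (q j)) = (\<Sum>j\<le>N. smult (\<Sum>k=j..N. a k) (q j) + smult (a (Suc N)) (q j))"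
    by (rule sum.cong) (auto simp: smult_add_left)
  also have "\<dots> = (\<Sum>k\<le>N. smult (a k) (\<Sum>j\<le>k. q j)) + smult (a (Suc N)) (\<Sum>j\<le>N. q j)"
    by (subst Suc.IH) (simp add: sum.distrib smult_sum_right)
  finally show ?case by (simp add: atMost_Suc algebra_simps smult_add_right)
qed

lemma tele: "j \<le> Suc N \<Longrightarrow> (\<Sum>k=j..N. (c k - c (Suc k) :: complex)) = c j - c (Suc N)"
proof -
  assume "j \<le> Suc N"
  then have h: "(\<Sum>k=j..N. c (Suc k) - c k) = c (Suc N) - c j" by (rule sum_Suc_diff)
  have "(\<Sum>k=j..N. -(c (Suc k) - c k)) = -(c (Suc N) - c j)" by (simp only: sum_negf h)
  then show ?thesis by simp
qed

locale two = p: qbasis p + q: qbasis q for p q +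
  assumes psum: "\<And>k. p k = (\<Sum>j\<le>k. q j)"
begin

lemma E_formula:
  assumes cz: "\<And>k. k > N \<Longrightarrow> c k = 0" and P: "P = (\<Sum>k\<le>N. smult (c k) (q k))"
  shows "basis_coeffs q (E_op p d P) j = (\<Sum>k=j..N. d k * (c k - c (Suc k)))"
proof -
  have P2: "P = (\<Sum>k\<le>N. smult (c k - c (Suc k)) (p k))"
  proof -
    have "(\<Sum>k\<le>N. smult (c k - c (Suc k)) (p k)) = (\<Sum>j\<le>N. smult (\<Sum>k=j..N. c k - c (Suc k)) (q j))"
      unfolding psum by (rule swap_sum)
    also have "\<dots> = (\<Sum>j\<le>N. smult (c j) (q j))"
      by (rule sum.cong) (auto simp: tele cz)
    finally show ?thesis using P by simp
  qed
  have bcp: "basis_coeffs p P k = c k - c (Suc k)" for k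
    using p.coeffs_sum[of "\<lambda>k. c k - c (Suc k)" N k] P2 cz by auto
  have dP: "degree P \<le> N" using P q.deg_sum_le by simp
  have "E_op p d P = (\<Sum>k\<le>degree P. smult (d k * basis_coeffs p P k) (p k))" by (simp add: E_op_def)
  also have "\<dots> = (\<Sum>k\<le>N. smult (d k * basis_coeffs p P k) (p k))"
    by (rule sum.mono_neutral_left) (use dP p.bc_zero in auto)
  also have "\<dots> = (\<Sum>k\<le>N. smult (d k * (c k - c (Suc k))) (p k))" by (simp add: bcp)
  also have "\<dots> = (\<Sum>j\<le>N. smult (\<Sum>k=j..N. d k * (c k - c (Suc k))) (q j))"
    unfolding psum by (rule swap_sum)
  finally have "E_op p d P = \<dots>" .
  then show ?thesis using q.coeffs_sum[of "\<lambda>j. \<Sum>k=j..N. d k * (c k - c (Suc k))" N j] by auto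
qed

lemma E_diff:
  "basis_coeffs q (E_op p d P) j - basis_coeffs q (E_op p d P) (Suc j)
   = d j * (basis_coeffs q P j - basis_coeffs q P (Suc j))"
proof -
  let ?c = "basis_coeffs q P" and ?N = "degree P"
  have cz: "\<And>k. k > ?N \<Longrightarrow> ?c k = 0" using q.bc_zero by auto
  have P: "P = (\<Sum>k\<le>?N. smult (?c k) (q k))" using q.bc_repr by auto
  note F = E_formula[OF cz P]
  show ?thesis
  proof (cases "j \<le> ?N")
    case True
    then have "{j..?N} = insert j {Suc j..?N}" by auto
    then show ?thesis using F[of d j] F[of d "Suc j"] by (simp add: algebra_simps)
  next
    case False
    then show ?thesis using F[of d j] F[of d "Suc j"] cz by simp
  qed
qed

end


lemma fin_block: "(\<lambda>k. if k \<le> N then (b::real) else 0) sums ((real N + 1) * b)"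
proof -
  have "(\<lambda>k. if k \<in> {..N} then b else 0) sums (\<Sum>k\<in>{..N}. b)" by (rule sums_If_finite_set) simp
  then show ?thesis by (simp add: atMost_iff add.commute)
qed

lemma tail_sums:
  fixes a :: "nat \<Rightarrow> real"
  assumes "summable a"
  shows "(\<lambda>k. if k \<le> N then 0 else a k) sums (suminf a - (\<Sum>k\<le>N. a k))"
proof -
  have h: "(\<lambda>k. if k \<in> {..N} then a k else 0) sums (\<Sum>k\<in>{..N}. a k)" by (rule sums_If_finite_set) simp
  have "(\<lambda>k. a k - (if k \<in> {..N} then a k else 0)) sums (suminf a - (\<Sum>k\<le>N. a k))"
    by (rule sums_diff[OF summable_sums[OF assms] h])
  then show ?thesis by (simp add: atMost_iff if_distrib cong: if_cong)
qed

lemma tail_lim: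
  fixes a :: "nat \<Rightarrow> real"
  assumes "summable a"
  shows "(\<lambda>N. suminf a - (\<Sum>k\<le>N. a k)) \<longlonglongrightarrow> 0"
proof -
  have "(\<lambda>N. suminf a - (\<Sum>k\<le>N. a k)) \<longlonglongrightarrow> suminf a - suminf a"
    by (intro tendsto_diff tendsto_const summable_LIMSEQ'[OF assms])
  then show ?thesis by simp
qed

lemma sq_to0:
  fixes z :: "nat \<Rightarrow> complex"
  assumes "\<And>j. (cmod (z j))^2 \<le> s j" "s \<longlonglongrightarrow> 0"
  shows "z \<longlonglongrightarrow> 0"
proof (rule Lim_null_comparison)
  show "\<forall>\<^sub>F j in sequentially. norm (z j) \<le> sqrt (s j)"
    using assms(1) by (intro always_eventually allI) (simp add: real_le_rsqrt)
  show "(\<lambda>j. sqrt (s j)) \<longlonglongrightarrow> 0" using tendsto_real_sqrt[OF assms(2)] by simp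
qed

lemma ell2_to0: "ell2 x \<Longrightarrow> x \<longlonglongrightarrow> 0"
  unfolding ell2_def by (rule sq_to0[OF order_refl summable_LIMSEQ_zero])

lemma ell2_lim_coord:
  assumes "ell2_lim X x"
  shows "(\<lambda>j. X j k) \<longlonglongrightarrow> x k"
proof -
  have "(\<lambda>j. X j k - x k) \<longlonglongrightarrow> 0"
  proof (rule sq_to0)
    fix j
    have "summable (\<lambda>k. (cmod (X j k - x k))^2)" using assms unfolding ell2_lim_def ell2_def by auto
    from sum_le_suminf[OF this, of "{k}"]
    show "(cmod (X j k - x k))^2 \<le> (\<Sum>k. (cmod (X j k - x k))^2)" by simp
  next
    show "(\<lambda>j. \<Sum>k. (cmod (X j k - x k))^2) \<longlonglongrightarrow> 0" using assms unfolding ell2_lim_def by auto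
  qed
  then show ?thesis by (rule LIM_zero_cancel)
qed


theorem theorem7:
  fixes \<alpha> :: real and d f g :: "nat \<Rightarrow> complex" and S :: complex
    and p q :: "nat \<Rightarrow> complex poly"
  assumes alpha: "\<alpha> > -1"
    and d_nonzero: "\<forall>n. d n \<noteq> 0"
    and d_nonconst: "\<not> (\<exists>c. \<forall>n. d n = c)"
    and p_def: "p = laguerre (\<alpha> + 1)"
    and q_def: "q = laguerre \<alpha>"
    and f_ell2: "ell2 f"
    and lim_S: "(\<lambda>n. \<Sum>u=1..n. f u * (d u - d (u - 1))) \<longlonglongrightarrow> S"
    and g_def: "g = (\<lambda>k. if k = 0 then S + f 0 * d 0
                     else S - (\<Sum>u=1..k. f u * (d u - d (u - 1))) + f k * d k)"
    and g_ell2: "ell2 g"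
    and lim0: "(\<lambda>n. (real n + 1) * (cmod (f n * d n - g n))^2) \<longlonglongrightarrow> 0"
  shows "f \<in> closure_domain q (E_op p d)
         \<and> in_closed_graph q (E_op p d) f g
         \<and> (\<forall>g'. in_closed_graph q (E_op p d) f g' \<longrightarrow> g' = g)"
proof -
  interpret two p q
  proof unfold_locales
    show "degree (p k) \<le> k" for k unfolding p_def by (rule laguerre_deg)
    show "coeff (p k) k \<noteq> 0" for k unfolding p_def by (rule laguerre_lead)
    show "degree (q k) \<le> k" for k unfolding q_def by (rule laguerre_deg)
    show "coeff (q k) k \<noteq> 0" for k unfolding q_def by (rule laguerre_lead)
    show "p k = (\<Sum>j\<le>k. q j)" for k unfolding p_def q_def by (rule laguerre_sum)
  qed
  have gdiff: "g k - g (Suc k) = d k * (f k - f (Suc k))" for k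
    by (cases k) (simp_all add: g_def algebra_simps)
  define fN where "fN N k = (if k \<le> N then f k else 0)" for N k
  define PN where "PN N = (\<Sum>k\<le>N. smult (fN N k) (q k))" for N
  have C: "basis_coeffs q (PN N) k = fN N k" for N k
    unfolding PN_def q.coeffs_sum by (simp add: fN_def)
  have D: "basis_coeffs q (E_op p d (PN N)) j = (if j \<le> N then g j - g N + f N * d N else 0)" for N j
  proof -
    have F: "basis_coeffs q (E_op p d (PN N)) j = (\<Sum>k=j..N. d k * (fN N k - fN N (Suc k)))"
      by (rule E_formula) (auto simp: fN_def PN_def)
    show ?thesis
    proof (cases "j \<le> N")
      case True
      have "(\<Sum>k=j..N. d k * (fN N k - fN N (Suc k))) = (\<Sum>k=j..<N. d k * (fN N k - fN N (Suc k))) + d N * (fN N N - fN N (Suc N))"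
        using True by (simp add: sum.last_plus)
      also have "(\<Sum>k=j..<N. d k * (fN N k - fN N (Suc k))) = (\<Sum>k=j..<N. -(g (Suc k) - g k))"
        by (rule sum.cong) (auto simp: fN_def gdiff[symmetric])
      also have "\<dots> = -(g N - g j)" using sum_Suc_diff'[OF True, of g] by (simp only: sum_negf)
      finally show ?thesis using F True by (simp add: fN_def algebra_simps)
    next
      case False
      then show ?thesis using F by simp
    qed
  qed
  have L1: "ell2_lim (\<lambda>N. basis_coeffs q (PN N)) f"
  proof -
    let ?a = "\<lambda>k. (cmod (f k))^2"
    have sa: "summable ?a" using f_ell2 unfolding ell2_def .
    have eq: "(\<lambda>k. (cmod (basis_coeffs q (PN N) k - f k))^2) = (\<lambda>k. if k \<le> N then 0 else ?a k)" for N
      by (auto simp: C fN_def)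
    show ?thesis unfolding ell2_lim_def ell2_def eq
      using tail_sums[OF sa] tail_lim[OF sa] by (auto simp: sums_iff)
  qed
  have L2: "ell2_lim (\<lambda>N. basis_coeffs q (E_op p d (PN N))) g"
  proof -
    let ?a = "\<lambda>k. (cmod (g k))^2"
    let ?A = "\<lambda>N. (cmod (f N * d N - g N))^2"
    have sa: "summable ?a" using g_ell2 unfolding ell2_def .
    have eq: "(\<lambda>k. (cmod (basis_coeffs q (E_op p d (PN N)) k - g k))^2)
       = (\<lambda>k. (if k \<le> N then ?A N else 0) + (if k \<le> N then 0 else ?a k))" for N
      by (auto simp: D algebra_simps)
    have s: "(\<lambda>k. (if k \<le> N then ?A N else 0) + (if k \<le> N then 0 else ?a k)) sums
        ((real N + 1) * ?A N + (suminf ?a - (\<Sum>k\<le>N. ?a k)))" for N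
      by (rule sums_add[OF fin_block tail_sums[OF sa]])
    have "(\<lambda>N. (real N + 1) * ?A N + (suminf ?a - (\<Sum>k\<le>N. ?a k))) \<longlonglongrightarrow> 0 + 0"
      by (rule tendsto_add[OF lim0 tail_lim[OF sa]])
    then show ?thesis unfolding ell2_lim_def ell2_def eq
      using s by (auto simp: sums_iff)
  qed
  have G: "in_closed_graph q (E_op p d) f g"
    unfolding in_closed_graph_def using f_ell2 g_ell2 L1 L2 by blast
  have U: "g' = g" if H: "in_closed_graph q (E_op p d) f g'" for g'
  proof -
    from H obtain P where g'2: "ell2 g'" and P1: "ell2_lim (\<lambda>j. basis_coeffs q (P j)) f"
      and P2: "ell2_lim (\<lambda>j. basis_coeffs q (E_op p d (P j))) g'"
      unfolding in_closed_graph_def by blast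
    have g'diff: "g' k - g' (Suc k) = d k * (f k - f (Suc k))" for k
    proof -
      have "(\<lambda>j. basis_coeffs q (E_op p d (P j)) k - basis_coeffs q (E_op p d (P j)) (Suc k)) \<longlonglongrightarrow> g' k - g' (Suc k)"
        by (intro tendsto_diff ell2_lim_coord[OF P2])
      moreover have "(\<lambda>j. basis_coeffs q (E_op p d (P j)) k - basis_coeffs q (E_op p d (P j)) (Suc k))
          = (\<lambda>j. d k * (basis_coeffs q (P j) k - basis_coeffs q (P j) (Suc k)))"
        by (simp add: E_diff)
      moreover have "(\<lambda>j. d k * (basis_coeffs q (P j) k - basis_coeffs q (P j) (Suc k))) \<longlonglongrightarrow> d k * (f k - f (Suc k))"
        by (intro tendsto_mult tendsto_const tendsto_diff ell2_lim_coord[OF P1])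
      ultimately show ?thesis using LIMSEQ_unique by metis
    qed
    have const: "g' k - g k = g' 0 - g 0" for k
    proof (induction k)
      case (Suc k)
      have "g' (Suc k) - g (Suc k) = g' k - g k" proof -
        have "g' k - g' (Suc k) = g k - g (Suc k)" using g'diff[of k] gdiff[of k] by simp
        then show ?thesis by (simp add: algebra_simps)
      qed
      then show ?case using Suc by simp
    qed simp
    have "(\<lambda>k. g' k - g k) \<longlonglongrightarrow> 0 - 0"
      by (intro tendsto_diff ell2_to0 g'2 g_ell2)
    moreover have "(\<lambda>k. g' k - g k) = (\<lambda>k. g' 0 - g 0)" by (rule ext) (rule const)
    ultimately have "(\<lambda>k. g' 0 - g 0) \<longlonglongrightarrow> 0" by simp
    then have z: "g' 0 - g 0 = 0" by (simp add: LIMSEQ_const_iff)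
    show "g' = g"
    proof
      fix k show "g' k = g k" using const[of k] z by simp
    qed
  qed
  show ?thesis using G U unfolding closure_domain_def by blast
qed

end
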